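(* Let $m\ge 2$ and $G=CK(2m-1)$. Every blocker for the simple Hamiltonian paths of $G$ contains at least two boundary edges.
   Context: $CK(2m-1)$ is the complete convex geometric graph on $2m-1$ points in convex position (vertices of a convex polygon $P$), labelled cyclically $0,\dots,2m-2$, with all segments between vertices as edges; boundary edges are the edges $[i,i+1]$ (mod $2m-1$) of $P$. A simple Hamiltonian path (SHP) is a path through all vertices whose edges pairwise do not cross. A blocker for SHPs is a set of edges of smallest possible size having an edge in common with every SHP. *)

theory Defs
  imports Main
begin

text \<open>The complete convex geometric graph CK(n): vertices 0..n-1 in convex position,
  labelled cyclically; edges are all 2-element subsets of vertices.\<close>

definition ck_edges :: "nat \<Rightarrow> nat set set" where
  "ck_edges n = {e. e \<subseteq> {..<n} \<and> card e = 2}"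

text \<open>Two segments between points in convex position cross (in their relative interiors)
  iff their four endpoints are distinct and interleave in the cyclic order; with labels
  0..n-1 this means e = {a,c}, f = {b,d} with a < b < c < d (up to swapping e and f).\<close>

definition crosses :: "nat set \<Rightarrow> nat set \<Rightarrow> bool" where
  "crosses e f \<longleftrightarrow> (\<exists>a b c d. a < b \<and> b < c \<and> c < d \<and>
      ((e = {a, c} \<and> f = {b, d}) \<or> (e = {b, d} \<and> f = {a, c})))"

definition path_edges :: "nat list \<Rightarrow> nat set set" where
  "path_edges xs = {{xs ! i, xs ! Suc i} | i. Suc i < length xs}"

definition is_shp :: "nat \<Rightarrow> nat list \<Rightarrow> bool" where
  "is_shp n xs \<longleftrightarrow> distinct xs \<and> set xs = {..<n} \<and>
     (\<forall>e\<in>path_edges xs. \<forall>f\<in>path_edges xs. \<not> crosses e f)"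

definition hits_all_shp :: "nat \<Rightarrow> nat set set \<Rightarrow> bool" where
  "hits_all_shp n B \<longleftrightarrow> (\<forall>xs. is_shp n xs \<longrightarrow> B \<inter> path_edges xs \<noteq> {})"

definition is_blocker :: "nat \<Rightarrow> nat set set \<Rightarrow> bool" where
  "is_blocker n B \<longleftrightarrow> B \<subseteq> ck_edges n \<and> hits_all_shp n B \<and>
     (\<forall>B'. B' \<subseteq> ck_edges n \<and> hits_all_shp n B' \<longrightarrow> card B \<le> card B')"

definition boundary_edges :: "nat \<Rightarrow> nat set set" where
  "boundary_edges n = {{i, Suc i mod n} | i. i < n}"

end

theory Submission
  imports Defs
begin

lemma bd_sub: "e \<in> boundary_edges n \<Longrightarrow> e \<subseteq> {..<n}"
  unfolding boundary_edges_def by auto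

lemma bd_nocross:
  assumes e: "e \<in> boundary_edges n" and f: "f \<in> boundary_edges n"
  shows "\<not> crosses e f"
proof
  assume "crosses e f"
  then obtain a b c d where o: "a < b" "b < c" "c < d"
    and cs: "(e = {a, c} \<and> f = {b, d}) \<or> (e = {b, d} \<and> f = {a, c})"
    unfolding crosses_def by blast
  have ef: "e \<subseteq> {..<n}" "f \<subseteq> {..<n}" using bd_sub e f by auto
  have key: "\<And>x y u v. {x, y} \<in> boundary_edges n \<Longrightarrow> x < u \<Longrightarrow> u < y \<Longrightarrow> v < n \<Longrightarrow> y < v \<Longrightarrow> False"
  proof -
    fix x y u v assume h: "{x, y} \<in> boundary_edges n" "x < u" "u < y" "v < n" "y < v"
    then obtain i where i: "i < n" "{x, y} = {i, Suc i mod n}" unfolding boundary_edges_def by auto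
    show False
    proof (cases "Suc i < n")
      case True
      then have "{x,y} = {i, Suc i}" using i by simp
      then show False using h by (auto simp: doubleton_eq_iff)
    next
      case False
      then have "Suc i = n" using i by simp
      then have "{x,y} = {i, 0}" using i by simp
      then show False using h \<open>Suc i = n\<close> by (auto simp: doubleton_eq_iff)
    qed
  qed
  from cs show False
  proof
    assume h: "e = {a, c} \<and> f = {b, d}"
    then have "d < n" using ef by auto
    then show False using key[of a c b d] h e o by auto
  next
    assume h: "e = {b, d} \<and> f = {a, c}"
    then have "d < n" using ef by auto
    then show False using key[of a c b d] h f o by auto
  qed
qed

lemma mod_inj:
  fixes a i i' n :: nat
  assumes "i < n" "i' < n" "(a + i) mod n = (a + i') mod n"
  shows "i = i'"
proof (rule ccontr)
  assume ne: "i \<noteq> i'"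
  have gen: "\<And>p q. p < q \<Longrightarrow> q < n \<Longrightarrow> (a + p) mod n = (a + q) mod n \<Longrightarrow> False"
  proof -
    fix p q assume pq: "p < q" "q < n" "(a + p) mod n = (a + q) mod n"
    then have "n dvd (a + q) - (a + p)" using mod_eq_dvd_iff_nat[of "a+p" "a+q" n] by auto
    then have "n dvd q - p" by simp
    moreover have "0 < q - p" "q - p < n" using pq by auto
    ultimately show False using nat_dvd_not_less by blast
  qed
  show False
  proof (cases "i < i'")
    case True then show ?thesis using gen[of i i'] assms by auto
  next
    case False then have "i' < i" using ne by auto
    then show ?thesis using gen[of i' i] assms by auto
  qed
qed

lemma bpath:
  fixes n j :: nat
  assumes n: "n \<ge> 3" and j: "j < n"
  shows "\<exists>xs. is_shp n xs \<and> path_edges xs \<subseteq> boundary_edges n - {{j, Suc j mod n}}"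
proof -
  define xs where "xs = map (\<lambda>i. (Suc j + i) mod n) [0..<n]"
  have len: "length xs = n" unfolding xs_def by simp
  have nth: "\<And>i. i < n \<Longrightarrow> xs ! i = (Suc j + i) mod n" unfolding xs_def by simp
  have inj: "inj_on (\<lambda>i. (Suc j + i) mod n) (set [0..<n])"
  proof (rule inj_onI)
    fix x y assume "x \<in> set [0..<n]" "y \<in> set [0..<n]" "(Suc j + x) mod n = (Suc j + y) mod n"
    then show "x = y" using mod_inj[of x n y "Suc j"] by simp
  qed
  have dist: "distinct xs" unfolding xs_def distinct_map using inj by simp
  have sub: "set xs \<subseteq> {..<n}" unfolding xs_def using n by auto
  have st: "set xs = {..<n}"
    using card_subset_eq[OF _ sub] dist len distinct_card[OF dist] by auto
  have pe: "path_edges xs \<subseteq> boundary_edges n - {{j, Suc j mod n}}"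
  proof
    fix e assume "e \<in> path_edges xs"
    then obtain i where i: "Suc i < length xs" "e = {xs ! i, xs ! Suc i}"
      unfolding path_edges_def by auto
    define k where "k = (Suc j + i) mod n"
    have kn: "k < n" unfolding k_def using n by auto
    have e2: "e = {k, Suc k mod n}"
      using i len nth[of i] nth[of "Suc i"] unfolding k_def by (simp add: mod_Suc_eq)
    have "e \<in> boundary_edges n" unfolding boundary_edges_def e2 using kn by auto
    moreover have "k \<noteq> j"
    proof
      assume "k = j"
      then have "(Suc j + i) mod n = (j + 0) mod n" unfolding k_def using j by simp
      then have "(j + Suc i) mod n = (j + 0) mod n" by simp
      then have "Suc i = 0" using mod_inj[of "Suc i" n 0 j] i len by auto
      then show False by simp
    qed
    moreover have "e \<noteq> {j, Suc j mod n}"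
    proof
      assume "e = {j, Suc j mod n}"
      then have "{k, Suc k mod n} = {j, Suc j mod n}" using e2 by simp
      with \<open>k \<noteq> j\<close> have a: "k = Suc j mod n" "j = Suc k mod n" by (auto simp: doubleton_eq_iff)
      show False
      proof (cases "Suc j < n")
        case True
        then have k: "k = Suc j" using a(1) by simp
        have jj: "j = Suc (Suc j) mod n" using a(2) unfolding k .
        show False
        proof (cases "Suc (Suc j) < n")
          case True then show False using jj by simp
        next
          case False
          then have "Suc (Suc j) = n" using \<open>Suc j < n\<close> by simp
          then show False using jj n by simp
        qed
      next
        case False
        then have "Suc j = n" using j by simp
        then have "k = 0" using a(1) by simp
        then have "j = Suc 0 mod n" using a(2) by simp
        then have "j = 1" using n by simp
        then show False using False n by simp
      qed
    qed
    ultimately show "e \<in> boundary_edges n - {{j, Suc j mod n}}" by simp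
  qed
  have "is_shp n xs" unfolding is_shp_def
    using dist st pe bd_nocross by blast
  then show ?thesis using pe by blast
qed

theorem mainTheorem4:
  fixes m :: nat and B :: "nat set set"
  assumes "m \<ge> 2"
    and "is_blocker (2 * m - 1) B"
  shows "card (B \<inter> boundary_edges (2 * m - 1)) \<ge> 2"
proof (rule ccontr)
  define n where "n = 2 * m - 1"
  have n: "n \<ge> 3" unfolding n_def using assms(1) by simp
  assume "\<not> card (B \<inter> boundary_edges (2 * m - 1)) \<ge> 2"
  then have c: "card (B \<inter> boundary_edges n) \<le> 1" unfolding n_def by simp
  have hit: "hits_all_shp n B" using assms(2) unfolding is_blocker_def n_def by simp
  have fin: "finite (boundary_edges n)" unfolding boundary_edges_def by simp
  obtain j where j: "j < n" "B \<inter> boundary_edges n \<subseteq> {{j, Suc j mod n}}"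
  proof (cases "B \<inter> boundary_edges n = {}")
    case True then show ?thesis using that[of 0] n by auto
  next
    case False
    then obtain e where e: "e \<in> B \<inter> boundary_edges n" by blast
    have "B \<inter> boundary_edges n = {e}"
    proof -
      have "finite (B \<inter> boundary_edges n)" using fin by simp
      then have "\<forall>a\<in>B \<inter> boundary_edges n. \<forall>b\<in>B \<inter> boundary_edges n. a = b"
        using c card_le_Suc0_iff_eq[of "B \<inter> boundary_edges n"] by simp
      then show ?thesis using e by blast
    qed
    moreover obtain i where "i < n" "e = {i, Suc i mod n}" using e unfolding boundary_edges_def by auto
    ultimately show ?thesis using that[of i] by auto
  qed
  obtain xs where xs: "is_shp n xs" "path_edges xs \<subseteq> boundary_edges n - {{j, Suc j mod n}}"
    using bpath[OF n j(1)] by blast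
  have "B \<inter> path_edges xs = {}" using xs(2) j(2) by blast
  then show False using hit xs(1) unfolding hits_all_shp_def by blast
qed

end
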